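(* Let $\Omega\subset\mathbb R^n$ be a $C^2$ domain, $x\in\partial\Omega$, and let $\mathbf e_1(x),\dots,\mathbf e_{n-1}(x)$ be an orthonormal eigenbasis of the shape operator of $\partial\Omega$ at $x$ with principal curvatures $\kappa_1(x),\dots,\kappa_{n-1}(x)$, i.e. $\partial_{\mathbf e_j(x)}\nu(x)=\kappa_j(x)\mathbf e_j(x)$. Then for every $u\in F$ with $\mathbb B(\nu(x))u=0$, $$\langle u,L_B(x)u\rangle=\sum_{j=1}^{n-1}\kappa_j(x)\,|\mathbb B(\mathbf e_j(x))u|^2 .$$
   Context: $E,F$ are finite-dimensional real or complex inner product spaces ($\langle\cdot,\cdot\rangle$ the real part of the inner product in the complex case). $B_1,\dots,B_n\in\mathcal L(F,E)$, $\mathbb B(\xi)=\sum_j\xi_jB_j$ for $\xi\in\mathbb R^n$, $e_1,\dots,e_n$ the standard basis. $\nu$ is the outward unit normal of $\Omega$, $N$ any $C^1$ extension of $\nu$ to a neighbourhood of $\partial\Omega$, and $L_B(x):=\sum_{j=1}^n\mathbb B(e_j)^*\mathbb B(\partial_jN(x))$ (generalized Levi matrix). *)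

theory Defs
  imports "HOL-Analysis.Analysis"
begin

definition C1_on :: "(real^'n \<Rightarrow> 'b::real_normed_vector) \<Rightarrow> (real^'n) set \<Rightarrow> bool" where
  "C1_on f S \<longleftrightarrow> f differentiable_on S \<and>
     (\<forall>i. continuous_on S (\<lambda>y. frechet_derivative f (at y) (axis i 1)))"

definition local_defining_function ::
  "(real^'n) set \<Rightarrow> real^'n \<Rightarrow> real \<Rightarrow> (real^'n \<Rightarrow> real) \<Rightarrow> (real^'n \<Rightarrow> real^'n) \<Rightarrow> bool" where
  "local_defining_function \<Omega> p r \<rho> g \<longleftrightarrow>
     0 < r \<and>
     (\<forall>y\<in>ball p r. (\<rho> has_derivative (\<lambda>h. g y \<bullet> h)) (at y)) \<and>
     C1_on g (ball p r) \<and>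
     (\<forall>y\<in>ball p r. g y \<noteq> 0) \<and>
     \<Omega> \<inter> ball p r = {y \<in> ball p r. \<rho> y < 0}"

definition C2_domain :: "(real^'n) set \<Rightarrow> bool" where
  "C2_domain \<Omega> \<longleftrightarrow> open \<Omega> \<and> connected \<Omega> \<and> \<Omega> \<noteq> {} \<and>
     (\<forall>p\<in>frontier \<Omega>. \<exists>r \<rho> g. local_defining_function \<Omega> p r \<rho> g)"

definition outward_unit_normal :: "(real^'n) set \<Rightarrow> (real^'n \<Rightarrow> real^'n) \<Rightarrow> bool" where
  "outward_unit_normal \<Omega> \<nu> \<longleftrightarrow>
     (\<forall>p\<in>frontier \<Omega>. \<exists>r \<rho> g. local_defining_function \<Omega> p r \<rho> g \<and>
        \<nu> p = (1 / norm (g p)) *\<^sub>R g p)"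

definition normal_C1_extension ::
  "(real^'n) set \<Rightarrow> (real^'n \<Rightarrow> real^'n) \<Rightarrow> (real^'n \<Rightarrow> real^'n) \<Rightarrow> bool" where
  "normal_C1_extension \<Omega> \<nu> N \<longleftrightarrow>
     (\<exists>U. open U \<and> frontier \<Omega> \<subseteq> U \<and> C1_on N U \<and>
          (\<forall>p\<in>frontier \<Omega>. N p = \<nu> p))"

definition Bsym :: "('n::finite \<Rightarrow> 'f \<Rightarrow> 'e::real_vector) \<Rightarrow> real^'n \<Rightarrow> 'f \<Rightarrow> 'e" where
  "Bsym B \<xi> = (\<lambda>u. \<Sum>j\<in>UNIV. (\<xi> $ j) *\<^sub>R B j u)"

definition levi_B ::
  "('n::finite \<Rightarrow> 'f::real_inner \<Rightarrow> 'e::real_inner) \<Rightarrow> (real^'n \<Rightarrow> real^'n) \<Rightarrow> real^'n \<Rightarrow> 'f \<Rightarrow> 'f" where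
  "levi_B B N x = (\<lambda>u. \<Sum>j\<in>UNIV.
      adjoint (Bsym B (axis j 1)) (Bsym B (frechet_derivative N (at x) (axis j 1)) u))"

end

theory Submission
  imports Defs
begin

lemma orthonormal_expand:
  fixes f :: "nat \<Rightarrow> 'a::euclidean_space"
  assumes on: "\<forall>i\<in>I. \<forall>j\<in>I. f i \<bullet> f j = (if i = j then 1 else 0)"
    and fin: "finite I" and cI: "card I = DIM('a)"
  shows "v = (\<Sum>a\<in>I. (v \<bullet> f a) *\<^sub>R f a)"
proof (rule ccontr)
  define w where "w = v - (\<Sum>a\<in>I. (v \<bullet> f a) *\<^sub>R f a)"
  assume "v \<noteq> (\<Sum>a\<in>I. (v \<bullet> f a) *\<^sub>R f a)"
  hence w0: "w \<noteq> 0" by (simp add: w_def)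
  have wf: "w \<bullet> f b = 0" if "b \<in> I" for b
  proof -
    have "(\<Sum>a\<in>I. (v \<bullet> f a) *\<^sub>R f a) \<bullet> f b = (\<Sum>a\<in>I. (v \<bullet> f a) * (f a \<bullet> f b))"
      by (simp add: inner_sum_left)
    also have "\<dots> = (\<Sum>a\<in>I. if a = b then v \<bullet> f b else 0)"
      using on that by (intro sum.cong) auto
    also have "\<dots> = v \<bullet> f b" using fin that by simp
    finally show ?thesis by (simp add: w_def inner_diff_left)
  qed
  have inj: "inj_on f I"
    using on by (auto simp: inj_on_def) (metis one_neq_zero)
  define S where "S = insert w (f ` I)"
  have wnot: "w \<notin> f ` I"
    using wf on by (auto) (metis one_neq_zero)
  have "pairwise orthogonal S"
    unfolding S_def pairwise_def orthogonal_def
    using wf on by (auto simp: inner_commute)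
  moreover have "0 \<notin> S" using w0 on unfolding S_def by auto (metis inner_zero_left zero_neq_one)
  ultimately have "independent S" by (rule pairwise_orthogonal_independent)
  hence "card S \<le> DIM('a)" using independent_bound by blast
  moreover have "card S = card I + 1"
    unfolding S_def using wnot fin inj by (simp add: card_image)
  ultimately show False using cI by simp
qed

lemma Bsym_linear_xi:
  "linear (\<lambda>a. Bsym B a u)"
  unfolding Bsym_def
  by (rule linearI) (auto simp: sum.distrib scaleR_add_left scaleR_scaleR scaleR_sum_right)

lemma Bsym_linear_u:
  assumes "\<And>j. linear (B j)"
  shows "linear (Bsym B a)"
  unfolding Bsym_def
  using assms by (intro linearI) (auto simp: linear_add linear_scale scaleR_add_right sum.distrib scaleR_sum_right mult.commute)

theorem mainTheorem7:
  fixes \<Omega> :: "(real^'n) set"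
    and \<nu> N :: "real^'n \<Rightarrow> real^'n"
    and B :: "'n \<Rightarrow> 'f::euclidean_space \<Rightarrow> 'e::euclidean_space"
    and x :: "real^'n"
    and e :: "nat \<Rightarrow> real^'n"
    and \<kappa> :: "nat \<Rightarrow> real"
    and u :: 'f
  assumes "C2_domain \<Omega>"
    and "outward_unit_normal \<Omega> \<nu>"
    and "normal_C1_extension \<Omega> \<nu> N"
    and "\<And>j. linear (B j)"
    and "x \<in> frontier \<Omega>"
    and "\<forall>i<CARD('n) - 1. \<forall>j<CARD('n) - 1. e i \<bullet> e j = (if i = j then 1 else 0)"
    and "\<forall>j<CARD('n) - 1. e j \<bullet> \<nu> x = 0"
    and "\<forall>D. (\<nu> has_derivative D) (at x within frontier \<Omega>) \<longrightarrow>
           (\<forall>j<CARD('n) - 1. D (e j) = \<kappa> j *\<^sub>R e j)"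
    and "Bsym B (\<nu> x) u = 0"
  shows "u \<bullet> levi_B B N x u = (\<Sum>j<CARD('n) - 1. \<kappa> j * (norm (Bsym B (e j) u))\<^sup>2)"
proof -
  define m where "m = CARD('n) - 1"
  have nm: "CARD('n) = Suc m" unfolding m_def using zero_less_card_finite[where 'a='n] by simp
  define M where "M = frechet_derivative N (at x)"
  obtain U where U: "open U" "frontier \<Omega> \<subseteq> U" "C1_on N U" "\<forall>p\<in>frontier \<Omega>. N p = \<nu> p"
    using assms(3) unfolding normal_C1_extension_def by blast
  have "N differentiable (at x)"
    using U assms(5) unfolding C1_on_def
    by (meson differentiable_on_eq_differentiable_at subsetD)
  hence dN: "(N has_derivative M) (at x)" unfolding M_def using frechet_derivative_works by blast
  hence linM: "linear M" using has_derivative_linear by blast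
  have "(\<nu> has_derivative M) (at x within frontier \<Omega>)"
    by (rule has_derivative_transform_within[OF has_derivative_at_withinI[OF dN] zero_less_one assms(5)])
       (use U in auto)
  hence Me: "\<And>j. j < m \<Longrightarrow> M (e j) = \<kappa> j *\<^sub>R e j" using assms(8) unfolding m_def by blast
  obtain r \<rho> g where ldf: "local_defining_function \<Omega> x r \<rho> g" "\<nu> x = (1 / norm (g x)) *\<^sub>R g x"
    using assms(2,5) unfolding outward_unit_normal_def by blast
  have "g x \<noteq> 0" using ldf(1) unfolding local_defining_function_def by auto
  hence nu1: "\<nu> x \<bullet> \<nu> x = 1" using ldf(2) by (simp add: dot_square_norm)
  define f where "f i = (if i < m then e i else \<nu> x)" for i
  have on: "\<forall>i\<in>{..<Suc m}. \<forall>j\<in>{..<Suc m}. f i \<bullet> f j = (if i = j then 1 else 0)"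
    using assms(6,7) nu1 unfolding f_def m_def by (auto simp: inner_commute less_Suc_eq)
  have exp: "v = (\<Sum>a<Suc m. (v \<bullet> f a) *\<^sub>R f a)" for v :: "real^'n"
    by (rule orthonormal_expand[OF on]) (simp_all add: nm)
  define L where "L a = Bsym B a u" for a
  have linL: "linear L" unfolding L_def by (rule Bsym_linear_xi)
  define \<Phi> where "\<Phi> a b = L (f a) \<bullet> L (M (f b))" for a b
  have ax: "axis j 1 = (\<Sum>a<Suc m. (f a $ j) *\<^sub>R f a)" for j
    using exp[of "axis j 1"] by (simp add: inner_commute[of "axis j 1"] inner_axis)
  have tm: "L (axis j 1) \<bullet> L (M (axis j 1)) =
      (\<Sum>a<Suc m. \<Sum>b<Suc m. (f a $ j * f b $ j) * \<Phi> a b)" for j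
  proof -
    have "L (axis j 1) = (\<Sum>a<Suc m. (f a $ j) *\<^sub>R L (f a))"
      by (subst ax) (simp only: linear_sum[OF linL] linear_scale[OF linL])
    moreover have "L (M (axis j 1)) = (\<Sum>b<Suc m. (f b $ j) *\<^sub>R L (M (f b)))"
      by (subst ax) (simp only: linear_sum[OF linL] linear_scale[OF linL]
            linear_sum[OF linM] linear_scale[OF linM])
    ultimately show ?thesis
      by (simp del: sum.lessThan_Suc add: \<Phi>_def inner_sum_left inner_sum_right sum_distrib_left mult.assoc) (subst sum.swap, simp add: mult.left_commute)
  qed
  have "u \<bullet> levi_B B N x u = (\<Sum>j\<in>UNIV. L (axis j 1) \<bullet> L (M (axis j 1)))"
    unfolding levi_B_def L_def M_def
    by (simp add: inner_sum_right adjoint_works[OF Bsym_linear_u[OF assms(4)]])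
  also have "\<dots> = (\<Sum>a<Suc m. \<Sum>b<Suc m. (\<Sum>j\<in>UNIV. f a $ j * f b $ j) * \<Phi> a b)"
    unfolding tm sum_distrib_right by (subst sum.swap, rule sum.cong[OF refl], rule sum.swap)
  also have "\<dots> = (\<Sum>a<Suc m. \<Sum>b<Suc m. (if a = b then \<Phi> a b else 0))"
  proof (intro sum.cong refl)
    fix a b assume "a \<in> {..<Suc m}" "b \<in> {..<Suc m}"
    hence "(\<Sum>j\<in>UNIV. f a $ j * f b $ j) = (if a = b then 1 else 0)"
      using on by (simp add: inner_vec_def)
    thus "(\<Sum>j\<in>UNIV. f a $ j * f b $ j) * \<Phi> a b = (if a = b then \<Phi> a b else 0)" by simp
  qed
  also have "\<dots> = (\<Sum>a<Suc m. \<Phi> a a)" by simp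
  also have "\<dots> = (\<Sum>a<m. \<Phi> a a) + \<Phi> m m" by simp
  also have "\<Phi> m m = 0" unfolding \<Phi>_def f_def L_def using assms(9) by simp
  also have "(\<Sum>a<m. \<Phi> a a) = (\<Sum>j<m. \<kappa> j * (norm (Bsym B (e j) u))\<^sup>2)"
    by (rule sum.cong) (simp_all add: \<Phi>_def f_def Me L_def linear_scale[OF linL, unfolded L_def]
        power2_norm_eq_inner)
  finally show ?thesis unfolding m_def by simp
qed

end
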